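(* Let $n\ge1$, $q\in\mathbb{C}^\times$, $\beta=-q-q^{-1}$, $0\le d\le n$ with $d\equiv n \bmod 2$, and $z\in\mathbb{C}^\times$. Then, as modules over the periodic Temperley--Lieb algebra $\mathsf{pTL}_n(\beta)$, the standard modules $\mathsf{W}_{n,d,z}$ and $\mathsf{W}_{n,d,-z}$ are isomorphic.
   Context: $\mathsf{pTL}_n(\beta)$ is the unital algebra of connectivities generated by $e_0,\dots,e_{n-1}$, where connectivities are diagrams on a cylinder (rectangle with left and right edges identified) with $n$ top and $n$ bottom nodes connected pairwise by non-intersecting curves; $e_j$ ($1\le j\le n-1$) joins top nodes $j,j+1$ and bottom nodes $j,j+1$ with all other strands vertical, and $e_0$ does the same for nodes $n,1$ across the periodic boundary; products stack the second factor on top of the first. A link state with $n$ nodes and $d$ defects is a diagram drawn above a horizontal segment with $n$ nodes, with periodic boundary condition, in which $(n-d)/2$ non-intersecting arcs join nodes pairwise (possibly crossing the periodic boundary) and the remaining $d$ nodes carry defects, vertical lines extending upward to infinity that cannot be overarched; $\mathsf{B}_{n,d}$ is the set of such link states, $|\mathsf{B}_{n,d}|=\binom{n}{(n-d)/2}$. The standard module $\mathsf{W}_{n,d,z}$ is the vector space with basis $\mathsf{B}_{n,d}$, on which a connectivity $c$ acts on $w$ by drawing $w$ above $c$: the result is $0$ if two defects get joined; otherwise it is the link state read off at the bottom, multiplied by $\beta$ for each contractible loop, by $\alpha=z+z^{-1}$ for each non-contractible loop (possible only when $d=0$), and, for $d>0$, by $z$ (resp. $z^{-1}$) for each time a defect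 crosses the periodic boundary moving leftwards (resp. rightwards) as it goes down. *)

theory Defs
  imports Complex_Main
begin

text \<open>
Nodes are numbered 0,...,n-1 (node i here is node i+1 of the paper).  For a node i < n,
w i = None means that i carries a defect, and w i = Some k means that an arc joins node i to the
node (i + k) mod n, where the arc, lifted to the universal cover of the cylinder (the integer line,
node i having the lifts i + m n), joins i to i + k; so k > 0 means the arc leaves i to the right,
k < 0 to the left, and the arc crosses the periodic boundary iff i + k is not in [0,n).
\<close>

type_synonym linkstate = "nat \<Rightarrow> int option"

definition node :: "nat \<Rightarrow> int \<Rightarrow> nat" where
  "node n x = nat (x mod int n)"

definition lifted_arcs :: "nat \<Rightarrow> linkstate \<Rightarrow> (int \<times> int) set" where
  "lifted_arcs n w = {(x, x + k) | x k. 0 < k \<and> w (node n x) = Some k}"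

definition is_link_state :: "nat \<Rightarrow> nat \<Rightarrow> linkstate \<Rightarrow> bool" where
  "is_link_state n d w \<longleftrightarrow>
     (\<forall>i. n \<le> i \<longrightarrow> w i = None) \<and>
     card {i. i < n \<and> w i = None} = d \<and>
     (\<forall>i k. i < n \<and> w i = Some k \<longrightarrow>
        k \<noteq> 0 \<and> \<bar>k\<bar> < int n \<and> w (node n (int i + k)) = Some (- k)) \<and>
     (\<forall>x1 y1 x2 y2. (x1, y1) \<in> lifted_arcs n w \<and> (x2, y2) \<in> lifted_arcs n w \<longrightarrow>
        \<not> (x1 < x2 \<and> x2 < y1 \<and> y1 < y2)) \<and>
     (\<forall>x y p. (x, y) \<in> lifted_arcs n w \<and> x < p \<and> p < y \<longrightarrow> w (node n p) \<noteq> None)"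

definition LS :: "nat \<Rightarrow> nat \<Rightarrow> linkstate set" where
  "LS n d = {w. is_link_state n d w}"

text \<open>
Action of the generator e_j (j < n) on a link state w in W_{n,d,z}: result is
(scalar, link state); scalar 0 means the result is the zero vector.  e_j joins the
nodes a = (j - 1) mod n and b = j (for j = 0: a = n-1, b = 0 across the boundary);
in lifted coordinates b sits at a + 1.  Defect twists: a defect whose lifted path,
traversed downwards, starts at node x in [0,n) and ends at the lifted position y picks up
z^(-(y div n)) (z per leftward and z^-1 per rightward crossing of the boundary).
\<close>
definition gen_act :: "nat \<Rightarrow> complex \<Rightarrow> complex \<Rightarrow> nat \<Rightarrow> linkstate \<Rightarrow> complex \<times> linkstate" where
  "gen_act n beta z j w =
    (let a = (j + n - 1) mod n; b = j mod n in
     (case (w a, w b) of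
        (None, None) \<Rightarrow> (0, w)
      | (None, Some kb) \<Rightarrow>
          (let c = node n (int b + kb); y = int a + 1 + kb in
           (z powi (- (y div int n)), w(a := Some 1, b := Some (-1), c := None)))
      | (Some ka, None) \<Rightarrow>
          (let c = node n (int a + ka); y = int b - 1 + ka in
           (z powi (- (y div int n)), w(a := Some 1, b := Some (-1), c := None)))
      | (Some ka, Some kb) \<Rightarrow>
          (if node n (int a + ka) = b then
             ((if ka = 1 then beta else z + inverse z), w(a := Some 1, b := Some (-1)))
           else
             (let c = node n (int a + ka); e = node n (int a + 1 + kb); m = 1 + kb - ka in
              (1, w(a := Some 1, b := Some (-1), c := Some m, e := Some (- m)))))))"

definition std_module :: "nat \<Rightarrow> nat \<Rightarrow> (linkstate \<Rightarrow> complex) set" where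
  "std_module n d = {v. \<forall>w. w \<notin> LS n d \<longrightarrow> v w = 0}"

definition std_act :: "nat \<Rightarrow> nat \<Rightarrow> complex \<Rightarrow> complex \<Rightarrow> nat \<Rightarrow>
    (linkstate \<Rightarrow> complex) \<Rightarrow> (linkstate \<Rightarrow> complex)" where
  "std_act n d beta z j v =
     (\<lambda>w'. \<Sum>w\<in>LS n d. if snd (gen_act n beta z j w) = w'
                        then fst (gen_act n beta z j w) * v w else 0)"

text \<open>
Isomorphism of pTL_n(beta)-modules W_{n,d,z} and W_{n,d,z'}: a linear bijection commuting
with the action of the generators e_0, ..., e_{n-1} (which generate the unital algebra).
\<close>
definition std_modules_iso :: "nat \<Rightarrow> nat \<Rightarrow> complex \<Rightarrow> complex \<Rightarrow> complex \<Rightarrow> bool" where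
  "std_modules_iso n d beta z z' \<longleftrightarrow>
     (\<exists>\<phi>. bij_betw \<phi> (std_module n d) (std_module n d) \<and>
          (\<forall>u\<in>std_module n d. \<forall>v\<in>std_module n d. \<forall>s t.
              \<phi> (\<lambda>w. s * u w + t * v w) = (\<lambda>w. s * \<phi> u w + t * \<phi> v w)) \<and>
          (\<forall>j<n. \<forall>v\<in>std_module n d.
              \<phi> (std_act n d beta z j v) = std_act n d beta z' j (\<phi> v)))"

end

theory Submission
  imports Defs
begin

definition gg :: "nat \<Rightarrow> nat \<Rightarrow> int option \<Rightarrow> int" where
  "gg n i ov = (case ov of None \<Rightarrow> 0 | Some k \<Rightarrow> if 0 < k then (int i + k) div int n else 0)"

definition NN :: "nat \<Rightarrow> linkstate \<Rightarrow> int" where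
  "NN n w = (\<Sum>i<n. gg n i (w i))"

definition sg :: "nat \<Rightarrow> linkstate \<Rightarrow> complex" where
  "sg n w = (if even (NN n w) then 1 else -1)"

lemma node_lt: "0 < n \<Longrightarrow> node n x < n"
  unfolding node_def by (simp add: nat_less_iff)

lemma node_int: "0 < n \<Longrightarrow> int (node n x) = x mod int n"
  unfolding node_def by simp

lemma NN_upd:
  assumes "p < n"
  shows "NN n (w(p := x)) = NN n w - gg n p (w p) + gg n p x"
proof -
  have f: "finite {..<n}" by simp
  have "NN n (w(p := x)) = gg n p x + (\<Sum>i\<in>{..<n} - {p}. gg n i ((w(p:=x)) i))"
    unfolding NN_def using assms by (subst sum.remove[OF f, of p]) auto
  also have "(\<Sum>i\<in>{..<n} - {p}. gg n i ((w(p:=x)) i)) = (\<Sum>i\<in>{..<n} - {p}. gg n i (w i))"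
    by (rule sum.cong) auto
  also have "NN n w = gg n p (w p) + (\<Sum>i\<in>{..<n} - {p}. gg n i (w i))"
    unfolding NN_def using assms by (subst sum.remove[OF f, of p]) auto
  ultimately show ?thesis unfolding fun_upd_def by linarith
qed

lemma gg_None[simp]: "gg n i None = 0" by (simp add: gg_def)
lemma gg_neg: "k \<le> 0 \<Longrightarrow> gg n i (Some k) = 0" by (simp add: gg_def)
lemma gg_pos: "0 < k \<Longrightarrow> gg n i (Some k) = (int i + k) div int n" by (simp add: gg_def)

lemma div_split: "0 < (n::int) \<Longrightarrow> (x + k) div n = x div n + (x mod n + k) div n"
proof -
  assume n: "0 < n"
  have "x + k = (x mod n + k) + (x div n) * n" by simp
  then have "(x + k) div n = ((x mod n + k) + (x div n) * n) div n" by simp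
  also have "\<dots> = x div n + (x mod n + k) div n" using n div_mult_self1[of n "x mod n + k" "x div n"] by simp
  finally show ?thesis .
qed

lemma pair_even:
  assumes "i < n"
  shows "even (gg n i (Some k) + gg n (node n (int i + k)) (Some (-k)) - (int i + k) div int n)"
proof -
  have n: "0 < n" using assms by simp
  consider "0 < k" | "k = 0" | "k < 0" by linarith
  then show ?thesis
  proof cases
    case 1 then show ?thesis by (simp add: gg_neg gg_pos)
  next
    case 2 then show ?thesis using assms by (simp add: gg_neg)
  next
    case 3
    have "(int i + k) div int n + ((int i + k) mod int n + - k) div int n = (int i + k + - k) div int n"
      using div_split[of "int n" "int i + k" "-k"] n by simp
    also have "\<dots> = 0" using assms by simp
    finally have e: "((int i + k) mod int n - k) div int n = - ((int i + k) div int n)" by simp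
    show ?thesis using 3 n by (simp add: gg_neg gg_pos node_int e)
  qed
qed

lemma sg_rel: "sg n w' = (if even (NN n w' - NN n w) then sg n w else - sg n w)"
  unfolding sg_def by auto

lemma sign_step:
  assumes "even (NN n w' - NN n w + t)"
  shows "(if even t then X else - X) * sg n w = sg n w' * X"
proof (cases "even t")
  case True
  then have "even (NN n w' - NN n w)" using assms even_add[of "NN n w' - NN n w" t] by simp
  then show ?thesis using True by (simp add: sg_rel[of n w' w])
next
  case False
  then have "odd (NN n w' - NN n w)" using assms even_add[of "NN n w' - NN n w" t] by simp
  then show ?thesis using False by (simp add: sg_rel[of n w' w])
qed

lemma gen_act_ab:
  assumes "j < n" "a = (j + n - 1) mod n"
  shows "gen_act n beta z j w =
     (case (w a, w j) of
        (None, None) \<Rightarrow> (0, w)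
      | (None, Some kb) \<Rightarrow>
          (let c = node n (int j + kb); y = int a + 1 + kb in
           (z powi (- (y div int n)), w(a := Some 1, j := Some (-1), c := None)))
      | (Some ka, None) \<Rightarrow>
          (let c = node n (int a + ka); y = int j - 1 + ka in
           (z powi (- (y div int n)), w(a := Some 1, j := Some (-1), c := None)))
      | (Some ka, Some kb) \<Rightarrow>
          (if node n (int a + ka) = j then
             ((if ka = 1 then beta else z + inverse z), w(a := Some 1, j := Some (-1)))
           else
             (let c = node n (int a + ka); e = node n (int a + 1 + kb); m = 1 + kb - ka in
              (1, w(a := Some 1, j := Some (-1), c := Some m, e := Some (- m))))))"
  unfolding gen_act_def Let_def by (simp only: mod_less[OF assms(1)] assms(2)[symmetric])

lemma a_facts:
  assumes "j < n" "a = (j + n - 1) mod n"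
  shows "a < n" "int a + 1 = int j + (if j = 0 then int n else 0)"
  using assms by (auto simp: mod_if)

lemma node_ne:
  assumes "i < n" "k \<noteq> 0" "\<bar>k\<bar> < int n"
  shows "node n (int i + k) \<noteq> i"
proof
  assume h: "node n (int i + k) = i"
  have n: "0 < n" using assms by simp
  have "(int i + k) mod int n = int i mod int n"
    using node_int[OF n, of "int i + k"] h assms(1) by simp
  then have "((int i + k) - int i) mod int n = (int i - int i) mod int n"
    by (rule mod_diff_cong) simp
  then have "int n dvd k" by (simp add: mod_eq_0_iff_dvd)
  then have "\<bar>int n\<bar> \<le> \<bar>k\<bar>" using assms(2) dvd_imp_le_int by blast
  then show False using assms(3) by simp
qed

lemma key:
  assumes L: "is_link_state n d w" and j: "j < n"
  shows "fst (gen_act n beta (-z) j w) * sg n w = sg n (snd (gen_act n beta z j w)) * fst (gen_act n beta z j w)"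
proof -
  define a where "a = (j + n - 1) mod n"
  have G: "gen_act n beta zz j w =
     (case (w a, w j) of
        (None, None) \<Rightarrow> (0, w)
      | (None, Some kb) \<Rightarrow>
          (let c = node n (int j + kb); y = int a + 1 + kb in
           (zz powi (- (y div int n)), w(a := Some 1, j := Some (-1), c := None)))
      | (Some ka, None) \<Rightarrow>
          (let c = node n (int a + ka); y = int j - 1 + ka in
           (zz powi (- (y div int n)), w(a := Some 1, j := Some (-1), c := None)))
      | (Some ka, Some kb) \<Rightarrow>
          (if node n (int a + ka) = j then
             ((if ka = 1 then beta else zz + inverse zz), w(a := Some 1, j := Some (-1)))
           else
             (let c = node n (int a + ka); e = node n (int a + 1 + kb); m = 1 + kb - ka in
              (1, w(a := Some 1, j := Some (-1), c := Some m, e := Some (- m))))))" for zz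
    by (rule gen_act_ab[OF j a_def])
  have n0: "0 < n" using j by simp
  have an: "a < n" and a1: "int a + 1 = int j + (if j = 0 then int n else 0)"
    using a_facts[OF j a_def] by auto
  have a1d: "(int a + 1) div int n = (if j = 0 then 1 else 0)" using a1 j by auto
  have jmod: "int j = (int a + 1) mod int n" using a1 j by auto
  have LSf: "\<And>i k. i < n \<Longrightarrow> w i = Some k \<Longrightarrow> k \<noteq> 0 \<and> \<bar>k\<bar> < int n \<and> w (node n (int i + k)) = Some (- k)"
    using L unfolding is_link_state_def by blast
  have aj: "a \<noteq> j" if "k \<noteq> 0" "\<bar>k\<bar> < int n" for k
    using a1 that by (cases "j = 0") auto
  have gga1: "gg n a (Some 1) = (if j = 0 then 1 else 0)" using a1d by (simp add: gg_pos)
  have ggm1: "gg n i (Some (-1)) = 0" for i by (simp add: gg_neg)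
  show ?thesis
  proof (cases "w a")
    case None note wa = None
    show ?thesis
    proof (cases "w j")
      case None then show ?thesis by (simp add: G wa)
    next
      case (Some kb) note wj = Some
      define c where "c = node n (int j + kb)"
      define w' where "w' = w(a := Some 1, j := Some (-1), c := None)"
      define t where "t = - ((int a + 1 + kb) div int n)"
      have kb: "kb \<noteq> 0" "\<bar>kb\<bar> < int n" "w c = Some (- kb)" using LSf[OF j wj] unfolding c_def by auto
      have cn: "c < n" unfolding c_def using node_lt[OF n0] .
      have ca: "c \<noteq> a" using wa kb(3) by auto
      have cj: "c \<noteq> j" unfolding c_def using node_ne[OF j kb(1,2)] .
      have ajn: "a \<noteq> j" using aj[OF kb(1,2)] .
      have fz: "fst (gen_act n beta zz j w) = zz powi t" for zz
        by (simp add: G wa wj Let_def t_def)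
      have sz: "snd (gen_act n beta zz j w) = w'" for zz
        by (simp add: G wa wj Let_def w'_def c_def)
      have NNw: "NN n w' = NN n w + gg n a (Some 1) - gg n j (Some kb) + gg n j (Some (-1)) - gg n c (Some (-kb))"
        unfolding w'_def using an j cn ca cj ajn wa wj kb(3) by (simp add: NN_upd)
      have P: "even (gg n j (Some kb) + gg n c (Some (- kb)) - (int j + kb) div int n)"
        unfolding c_def by (rule pair_even[OF j])
      then obtain r where r: "gg n j (Some kb) + gg n c (Some (- kb)) - (int j + kb) div int n = 2 * r" by blast
      have D: "(int a + 1 + kb) div int n = (int j + kb) div int n + (if j = 0 then 1 else 0)"
        using a1 n0 by auto
      have "NN n w' - NN n w + t = 2 * (- r - (int j + kb) div int n)"
        unfolding t_def NNw D gga1 ggm1 using r by auto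
      then have E: "even (NN n w' - NN n w + t)" by simp
      show ?thesis unfolding fz sz power_int_minus_left by (rule sign_step[OF E])
    qed
  next
    case (Some ka) note wa = Some
    have ka: "ka \<noteq> 0" "\<bar>ka\<bar> < int n" "w (node n (int a + ka)) = Some (- ka)" using LSf[OF an wa] by auto
    have ajn: "a \<noteq> j" using aj[OF ka(1,2)] .
    show ?thesis
    proof (cases "w j")
      case None note wj = None
      define c where "c = node n (int a + ka)"
      define w' where "w' = w(a := Some 1, j := Some (-1), c := None)"
      define t where "t = - ((int j - 1 + ka) div int n)"
      have cn: "c < n" unfolding c_def using node_lt[OF n0] .
      have ca: "c \<noteq> a" unfolding c_def using node_ne[OF an ka(1,2)] .
      have cj: "c \<noteq> j" using wj ka(3) c_def by auto
      have wc0: "w c = Some (- ka)" using ka(3) c_def by simp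
      have fz: "fst (gen_act n beta zz j w) = zz powi t" for zz
        by (simp add: G wa wj Let_def t_def)
      have sz: "snd (gen_act n beta zz j w) = w'" for zz
        by (simp add: G wa wj Let_def w'_def c_def)
      have NNw: "NN n w' = NN n w - gg n a (Some ka) + gg n a (Some 1) + gg n j (Some (-1)) - gg n c (Some (-ka))"
        using an j cn ca cj ajn wa wj wc0 unfolding w'_def by (simp add: NN_upd)
      have P: "even (gg n a (Some ka) + gg n c (Some (- ka)) - (int a + ka) div int n)"
        unfolding c_def by (rule pair_even[OF an])
      then obtain r where r: "gg n a (Some ka) + gg n c (Some (- ka)) - (int a + ka) div int n = 2 * r" by blast
      have D: "(int j - 1 + ka) div int n = (int a + ka) div int n - (if j = 0 then 1 else 0)"
      proof -
        have "int j - 1 + ka = (int a + ka) + (if j = 0 then -1 else 0) * int n" using a1 by auto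
        then show ?thesis using n0 by (simp only: div_mult_self1) simp
      qed
      have "NN n w' - NN n w + t = 2 * ((if j = 0 then 1 else 0) - r - (int a + ka) div int n)"
        unfolding t_def NNw D gga1 ggm1 using r by auto
      then have E: "even (NN n w' - NN n w + t)" by simp
      show ?thesis unfolding fz sz power_int_minus_left by (rule sign_step[OF E])
    next
      case (Some kb) note wj = Some
      show ?thesis
      proof (cases "node n (int a + ka) = j")
        case True note J = True
        have kbka: "kb = - ka" using ka(3) J wj by simp
        show ?thesis
        proof (cases "ka = 1")
          case True
          have "w(a := Some 1, j := Some (-1)) = w" using wa wj True kbka by auto
          then show ?thesis using J True by (simp add: G wa wj)
        next
          case False
          define w' where "w' = w(a := Some 1, j := Some (-1))"
          have fz: "fst (gen_act n beta zz j w) = zz + inverse zz" for zz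
            by (simp add: G wa wj J False)
          have sz: "snd (gen_act n beta zz j w) = w'" for zz
            by (simp add: G wa wj J False w'_def)
          have "(int a + ka) mod int n = (int a + 1) mod int n"
            using node_int[OF n0, of "int a + ka"] J jmod by simp
          then have "((int a + ka) - (int a + 1)) mod int n = ((int a + 1) - (int a + 1)) mod int n"
            by (rule mod_diff_cong) simp
          then have "(ka - 1) mod int n = 0" by simp
          then have dv: "int n dvd (ka - 1)" by (simp add: mod_eq_0_iff_dvd)
          have "ka - 1 \<noteq> 0" using False by simp
          then have "\<bar>int n\<bar> \<le> \<bar>ka - 1\<bar>" using dv dvd_imp_le_int by blast
          then have kaval: "ka = 1 - int n" using ka(2) False by auto
          have g1: "gg n a (Some ka) = 0" using kaval n0 by (intro gg_neg) simp
          have g2: "gg n j (Some kb) = (if j = 0 then 0 else 1)"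
          proof -
            have "kb = int n - 1" using kbka kaval by simp
            moreover have "0 < kb" using kaval ka(1) kbka n0 by linarith
            moreover have "(int j + (int n - 1)) div int n = (if j = 0 then 0 else 1)"
            proof (cases "j = 0")
              case True then show ?thesis using n0 by simp
            next
              case False
              have "int j + (int n - 1) = (int j - 1) + 1 * int n" by simp
              then have "(int j + (int n - 1)) div int n = (int j - 1) div int n + 1"
                using n0 by (simp only: div_mult_self1)
              then show ?thesis using False j by simp
            qed
            ultimately show ?thesis by (simp add: gg_pos)
          qed
          have NNw: "NN n w' = NN n w - gg n a (Some ka) + gg n a (Some 1) - gg n j (Some kb) + gg n j (Some (-1))"
            unfolding w'_def using an j ajn wa wj by (simp add: NN_upd)
          have "NN n w' - NN n w = (if j = 0 then 1 else -1)"
            unfolding NNw g1 g2 gga1 ggm1 by simp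
          then have O: "odd (NN n w' - NN n w)" by simp
          show ?thesis unfolding fz sz using O by (simp add: sg_rel[of n w' w] inverse_minus_eq algebra_simps)
        qed
      next
        case False note J = False
        define c where "c = node n (int a + ka)"
        define e where "e = node n (int a + 1 + kb)"
        define m where "m = 1 + kb - ka"
        define w' where "w' = w(a := Some 1, j := Some (-1), c := Some m, e := Some (- m))"
        have kb: "kb \<noteq> 0" "\<bar>kb\<bar> < int n" "w (node n (int j + kb)) = Some (- kb)" using LSf[OF j wj] by auto
        have fz: "fst (gen_act n beta zz j w) = 1" for zz
          by (simp add: G wa wj J Let_def)
        have sz: "snd (gen_act n beta zz j w) = w'" for zz
          by (simp add: G wa wj J Let_def w'_def c_def e_def m_def)
        have ee: "e = node n (int j + kb)"
        proof -
          have "int a + 1 + kb = (int j + kb) + (if j = 0 then 1 else 0) * int n" using a1 by auto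
          then show ?thesis unfolding e_def node_def by simp
        qed
        have cn: "c < n" unfolding c_def using node_lt[OF n0] .
        have en: "e < n" unfolding e_def using node_lt[OF n0] .
        have wc: "w c = Some (- ka)" using ka(3) c_def by simp
        have we: "w e = Some (- kb)" using kb(3) ee by simp
        have ca: "c \<noteq> a" unfolding c_def using node_ne[OF an ka(1,2)] .
        have cj: "c \<noteq> j" using J c_def by simp
        have ej: "e \<noteq> j" unfolding ee using node_ne[OF j kb(1,2)] .
        have ea: "e \<noteq> a"
        proof
          assume h: "e = a"
          then have "ka = - kb" using wa we by simp
          have "int a = (int j + kb) mod int n" using h ee node_int[OF n0, of "int j + kb"] by metis
          then have "int (node n (int a + ka)) = ((int j + kb) mod int n + - kb) mod int n"
            using node_int[OF n0] `ka = - kb` by simp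
          also have "\<dots> = int j" using j by (simp add: mod_diff_left_eq)
          finally show False using J by simp
        qed
        have ce: "c \<noteq> e"
        proof
          assume h: "c = e"
          then have "ka = kb" using wc we by simp
          have "(int a + ka) mod int n = (int j + ka) mod int n"
            using h ee c_def node_int[OF n0] `ka = kb` by metis
          then have "((int a + ka) - ka) mod int n = ((int j + ka) - ka) mod int n"
            by (rule mod_diff_cong) simp
          then show False using an j ajn by simp
        qed
        have NNw: "NN n w' = NN n w - gg n a (Some ka) + gg n a (Some 1) - gg n j (Some kb) + gg n j (Some (-1))
             - gg n c (Some (-ka)) + gg n c (Some m) - gg n e (Some (-kb)) + gg n e (Some (- m))"
          unfolding w'_def using an j cn en ca cj ej ea ce ajn wa wj wc we by (simp add: NN_upd)
        have P1: "even (gg n a (Some ka) + gg n c (Some (- ka)) - (int a + ka) div int n)"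
          unfolding c_def by (rule pair_even[OF an])
        then obtain r1 where r1: "gg n a (Some ka) + gg n c (Some (- ka)) - (int a + ka) div int n = 2 * r1" by blast
        have P2: "even (gg n j (Some kb) + gg n e (Some (- kb)) - (int j + kb) div int n)"
          unfolding ee by (rule pair_even[OF j])
        then obtain r2 where r2: "gg n j (Some kb) + gg n e (Some (- kb)) - (int j + kb) div int n = 2 * r2" by blast
        have ec: "e = node n (int c + m)"
          unfolding e_def c_def m_def node_def using n0 by (simp add: mod_add_left_eq add.assoc)
        have P3: "even (gg n c (Some m) + gg n e (Some (- m)) - (int c + m) div int n)"
          unfolding ec by (rule pair_even[OF cn])
        then obtain r3 where r3: "gg n c (Some m) + gg n e (Some (- m)) - (int c + m) div int n = 2 * r3" by blast
        have D1: "(int c + m) div int n = (int a + 1 + kb) div int n - (int a + ka) div int n"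
          using div_split[of "int n" "int a + ka" m] n0 node_int[OF n0, of "int a + ka"] unfolding c_def m_def
          by (simp add: add.assoc)
        have D2: "(int a + 1 + kb) div int n = (int j + kb) div int n + (if j = 0 then 1 else 0)"
          using a1 n0 by auto
        have "NN n w' - NN n w = 2 * (r3 - r1 - r2 + (if j = 0 then 1 else 0) - (int a + ka) div int n)"
          unfolding NNw using r1 r2 r3 D1 D2 gga1 ggm1 by auto
        then have E: "even (NN n w' - NN n w)" by simp
        show ?thesis unfolding fz sz using E by (simp add: sg_rel[of n w' w])
      qed
    qed
  qed
qed

lemma snd_gen_act_z: "snd (gen_act n beta z' j w) = snd (gen_act n beta z j w)"
  unfolding gen_act_def Let_def by (simp split: option.split)

lemma sg_sq: "sg n w * sg n w = 1" unfolding sg_def by simp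

theorem lemma2p4:
  fixes n d :: nat and q z :: complex
  assumes "1 \<le> n" and "q \<noteq> 0" and "d \<le> n" and "d mod 2 = n mod 2" and "z \<noteq> 0"
  shows "std_modules_iso n d (- q - inverse q) z (- z)"
proof -
  define beta where "beta = - q - inverse q"
  define \<phi> where "\<phi> = (\<lambda>(v :: linkstate \<Rightarrow> complex) w. sg n w * v w)"
  have inv: "\<phi> (\<phi> v) = v" for v
    unfolding \<phi>_def by (rule ext) (simp add: mult.assoc[symmetric] sg_sq)
  have cl: "\<phi> v \<in> std_module n d" if "v \<in> std_module n d" for v
    using that unfolding \<phi>_def std_module_def by simp
  have bij: "bij_betw \<phi> (std_module n d) (std_module n d)"
    by (rule bij_betw_byWitness[where f' = \<phi>]) (use inv cl in auto)
  have lin: "\<phi> (\<lambda>w. s * u w + t * v w) = (\<lambda>w. s * \<phi> u w + t * \<phi> v w)" for u v s t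
    unfolding \<phi>_def by (rule ext) (simp add: algebra_simps)
  have comm: "\<phi> (std_act n d beta z j v) = std_act n d beta (- z) j (\<phi> v)" if j: "j < n" for j v
  proof (rule ext)
    fix w'
    have "\<phi> (std_act n d beta z j v) w' =
       (\<Sum>w\<in>LS n d. if snd (gen_act n beta z j w) = w'
          then sg n (snd (gen_act n beta z j w)) * fst (gen_act n beta z j w) * v w else 0)"
      unfolding \<phi>_def std_act_def by (simp add: sum_distrib_left mult.assoc if_distrib cong: if_cong)
    also have "\<dots> = (\<Sum>w\<in>LS n d. if snd (gen_act n beta (- z) j w) = w'
          then fst (gen_act n beta (- z) j w) * (sg n w * v w) else 0)"
    proof (rule sum.cong)
      fix w assume "w \<in> LS n d"
      then have L: "is_link_state n d w" unfolding LS_def by simp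
      show "(if snd (gen_act n beta z j w) = w'
          then sg n (snd (gen_act n beta z j w)) * fst (gen_act n beta z j w) * v w else 0) =
          (if snd (gen_act n beta (- z) j w) = w'
          then fst (gen_act n beta (- z) j w) * (sg n w * v w) else 0)"
        using key[OF L j, of beta z] snd_gen_act_z[of n beta "- z" j w z]
        by (simp add: mult.assoc[symmetric])
    qed simp
    also have "\<dots> = std_act n d beta (- z) j (\<phi> v) w'"
      unfolding \<phi>_def std_act_def by simp
    finally show "\<phi> (std_act n d beta z j v) w' = std_act n d beta (- z) j (\<phi> v) w'" .
  qed
  show ?thesis
    unfolding std_modules_iso_def beta_def[symmetric]
    using bij lin comm by blast
qed

end
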